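(* Let $X\in\mathbb{R}^{n\times d}$, $y\in\mathbb{R}^n$, and let $g:\mathbb{R}^d\to(-\infty,\infty]$ be a proper lower semicontinuous convex function with $g(k\beta)=kg(\beta)$ for all $k\ge0$, $\beta\in\mathbb{R}^d$, and with some $\beta\in\mathrm{relint}(\mathrm{dom}(g))$. For $\lambda>0$ consider the problem $\min_\beta \frac12\|\frac1\lambda y-X\beta\|_2^2+g(\beta)$, assumed to attain its minimum, with Fenchel–Rockafellar dual $\max_\theta -\frac12\|\theta\|_2^2+\frac1\lambda y^\top\theta-g^\star(X^\top\theta)$; let $\hat\beta^{(\lambda)}$ and $\hat\theta^{(\lambda)}$ be primal and dual optimal points, respectively. Fix $\lambda_0>0$ and define \[ \mathcal{R}^{\mathrm{Sasvi}}(\lambda_0)=\Big\{\theta\ \Big|\ 0\ge(y-\theta)^\top(\hat\theta^{(\lambda_0)}-\theta)\ \land\ 0\ge\big(\tfrac1{\lambda_0}y-\hat\theta^{(\lambda_0)}\big)^\top(\theta-\hat\theta^{(\lambda_0)})\Big\}, \] \[ \mathcal{R}^{\mathrm{DS}}(\hat\beta^{(\lambda_0)},\hat\theta^{(\lambda_0)})=\Big\{\theta\ \Big|\ \Big\|\theta-\tfrac12(\hat\theta^{(\lambda_0)}+y)\Big\|_2^2\le\tfrac14\|\hat\theta^{(\lambda_0)}-y\|_2^2\ \land\ 0\le g(\hat\beta^{(\lambda_0)})-\theta^\top X\hat\beta^{(\lambda_0)}\Big\}. \] Then $\mathcal{R}^{\mathrm{Sasvi}}(\lambda_0)=\mathc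al{R}^{\mathrm{DS}}(\hat\beta^{(\lambda_0)},\hat\theta^{(\lambda_0)})$.
   Context: $g^\star(v)=\sup_\beta v^\top\beta-g(\beta)$ is the Fenchel conjugate; $\mathrm{dom}(g)=\{\beta:|g(\beta)|<\infty\}$; $\mathrm{relint}$ is relative interior. Both sets are regions intended to contain the dual optimal point $\hat\theta^{(1)}$ of the $\lambda=1$ problem. *)

theory Defs
  imports "HOL-Analysis.Analysis"
begin

definition edom :: "('a \<Rightarrow> ereal) \<Rightarrow> 'a set" where
  "edom g = {x. \<bar>g x\<bar> < \<infinity>}"

definition proper_fun :: "('a \<Rightarrow> ereal) \<Rightarrow> bool" where
  "proper_fun g \<longleftrightarrow> (\<forall>x. g x \<noteq> -\<infinity>) \<and> (\<exists>x. g x < \<infinity>)"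

definition econvex :: "('a::real_vector \<Rightarrow> ereal) \<Rightarrow> bool" where
  "econvex g \<longleftrightarrow> convex {(x, r::real). g x \<le> ereal r}"

definition elsc :: "('a::topological_space \<Rightarrow> ereal) \<Rightarrow> bool" where
  "elsc g \<longleftrightarrow> (\<forall>c::ereal. closed {x. g x \<le> c})"

definition fenchel_conj :: "('a::real_inner \<Rightarrow> ereal) \<Rightarrow> 'a \<Rightarrow> ereal" where
  "fenchel_conj g v = (SUP b. ereal (v \<bullet> b) - g b)"

definition primal_obj ::
  "real^'d^'n \<Rightarrow> real^'n \<Rightarrow> (real^'d \<Rightarrow> ereal) \<Rightarrow> real \<Rightarrow> real^'d \<Rightarrow> ereal" where
  "primal_obj X y g lam b = ereal (1/2 * (norm ((1/lam) *\<^sub>R y - X *v b))\<^sup>2) + g b"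

definition dual_obj ::
  "real^'d^'n \<Rightarrow> real^'n \<Rightarrow> (real^'d \<Rightarrow> ereal) \<Rightarrow> real \<Rightarrow> real^'n \<Rightarrow> ereal" where
  "dual_obj X y g lam \<theta> =
     ereal (- 1/2 * (norm \<theta>)\<^sup>2 + (1/lam) * (y \<bullet> \<theta>)) - fenchel_conj g (transpose X *v \<theta>)"

definition R_Sasvi :: "real^'n \<Rightarrow> real \<Rightarrow> real^'n \<Rightarrow> (real^'n) set" where
  "R_Sasvi y lam0 \<theta>0 =
     {\<theta>. 0 \<ge> (y - \<theta>) \<bullet> (\<theta>0 - \<theta>) \<and> 0 \<ge> ((1/lam0) *\<^sub>R y - \<theta>0) \<bullet> (\<theta> - \<theta>0)}"

definition R_DS ::
  "real^'d^'n \<Rightarrow> real^'n \<Rightarrow> (real^'d \<Rightarrow> ereal) \<Rightarrow> real^'d \<Rightarrow> real^'n \<Rightarrow> (real^'n) set" where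
  "R_DS X y g b0 \<theta>0 =
     {\<theta>. (norm (\<theta> - (1/2) *\<^sub>R (\<theta>0 + y)))\<^sup>2 \<le> 1/4 * (norm (\<theta>0 - y))\<^sup>2
          \<and> 0 \<le> g b0 - ereal (\<theta> \<bullet> (X *v b0))}"

end

theory Submission
  imports Defs
begin

lemma tr_inner: fixes X :: "real^'d^'n" shows "t \<bullet> (X *v b) = (transpose X *v t) \<bullet> b"
  by (simp add: inner_vec_def matrix_vector_mult_def transpose_def sum_distrib_left
      sum_distrib_right mult_ac) (rule sum.swap)

lemma aux_lim:
  fixes p q c :: real
  assumes h: "\<And>t. 0 < t \<Longrightarrow> t \<le> 1 \<Longrightarrow> 0 \<le> - t * p + t^2/2 * q + t * c" and q: "q \<ge> 0"
  shows "p \<le> c"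
proof (rule ccontr)
  assume "\<not> p \<le> c"
  define d where "d = p - c"
  have d: "d > 0" using \<open>\<not> p \<le> c\<close> d_def by simp
  define t where "t = min 1 (d / (q + 1))"
  have t0: "t > 0" using d q by (simp add: t_def)
  have t1: "t \<le> 1" by (simp add: t_def)
  have tq: "t \<le> d / (q+1)" by (simp add: t_def)
  have "t * q \<le> d / (q+1) * q" using mult_right_mono[OF tq q] by simp
  also have "\<dots> < d" using d q by (simp add: field_simps)
  finally have tqd: "t * q < d" .
  have "- t * p + t^2/2 * q + t * c = t * (t*q/2 - d)" by (simp add: d_def power2_eq_square algebra_simps)
  also have "\<dots> < 0" using t0 tqd d by (intro mult_pos_neg) auto
  finally show False using h[OF t0 t1] by simp
qed

lemma ereal_aux: "F \<le> ereal q \<Longrightarrow> ereal (s - q) \<le> ereal s - F" by (cases F) auto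

theorem theorem8:
  fixes X :: "real^'d^'n" and y :: "real^'n" and g :: "real^'d \<Rightarrow> ereal"
    and lam0 :: real and \<beta>0 :: "real^'d" and \<theta>0 :: "real^'n"
  assumes "proper_fun g" and "elsc g" and "econvex g"
    and "\<forall>k::real. k \<ge> 0 \<longrightarrow> (\<forall>\<beta>. g (k *\<^sub>R \<beta>) = ereal k * g \<beta>)"
    and "rel_interior (edom g) \<noteq> {}"
    and "lam0 > 0"
    and "\<forall>\<beta>. primal_obj X y g lam0 \<beta>0 \<le> primal_obj X y g lam0 \<beta>"
    and "\<forall>\<theta>. dual_obj X y g lam0 \<theta> \<le> dual_obj X y g lam0 \<theta>0"
  shows "R_Sasvi y lam0 \<theta>0 = R_DS X y g \<beta>0 \<theta>0"
proof -
  note prim = assms(7)[unfolded primal_obj_def]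
  define a where "a = (1/lam0) *\<^sub>R y"
  define r where "r = a - X *v \<beta>0"
  have prim': "ereal (1/2 * (norm r)\<^sup>2) + g \<beta>0 \<le> ereal (1/2 * (norm (a - X *v b))\<^sup>2) + g b" for b
    using prim unfolding a_def r_def by blast
  obtain x where gx: "g x < \<infinity>" using assms(1) unfolding proper_fun_def by blast
  have "ereal (1/2 * (norm r)\<^sup>2) + g \<beta>0 < \<infinity>"
    using prim'[of x] gx by (auto simp: le_less_trans)
  then have "g \<beta>0 < \<infinity>" by auto
  moreover have "g \<beta>0 \<noteq> -\<infinity>" using assms(1) unfolding proper_fun_def by blast
  ultimately obtain G0 where G0: "g \<beta>0 = ereal G0" by (cases "g \<beta>0") auto
  have epi: "convex {(x, r::real). g x \<le> ereal r}" using assms(3) unfolding econvex_def .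
  have subg: "r \<bullet> (X *v b) - r \<bullet> (X *v \<beta>0) \<le> Gb - G0" if gb: "g b = ereal Gb" for b Gb
  proof -
    define u where "u = X *v (b - \<beta>0)"
    have "r \<bullet> u \<le> Gb - G0"
    proof (rule aux_lim[where q = "(norm u)^2"])
      fix t :: real assume t0: "0 < t" and t1: "t \<le> 1"
      have "(1 - t) *\<^sub>R (\<beta>0, G0) + t *\<^sub>R (b, Gb) \<in> {(x, r::real). g x \<le> ereal r}"
        by (rule convexD[OF epi]) (use t0 t1 G0 gb in auto)
      then have gt: "g ((1 - t) *\<^sub>R \<beta>0 + t *\<^sub>R b) \<le> ereal ((1 - t) * G0 + t * Gb)" by simp
      have eqb: "(1 - t) *\<^sub>R \<beta>0 + t *\<^sub>R b = \<beta>0 + t *\<^sub>R (b - \<beta>0)" by (simp add: algebra_simps)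
      have eqa: "a - X *v ((1 - t) *\<^sub>R \<beta>0 + t *\<^sub>R b) = r - t *\<^sub>R u"
        unfolding eqb u_def r_def by (simp add: matrix_vector_right_distrib matrix_vector_mult_scaleR)
      have nrm: "(norm (r - t *\<^sub>R u))\<^sup>2 = (norm r)\<^sup>2 - 2 * t * (r \<bullet> u) + t^2 * (norm u)^2"
        unfolding power2_norm_eq_inner by (simp add: inner_diff_left inner_diff_right inner_commute
            power2_eq_square algebra_simps)
      have "ereal (1/2 * (norm r)\<^sup>2) + g \<beta>0 \<le> ereal (1/2 * (norm (r - t *\<^sub>R u))\<^sup>2) + g ((1 - t) *\<^sub>R \<beta>0 + t *\<^sub>R b)"
        using prim'[of "(1 - t) *\<^sub>R \<beta>0 + t *\<^sub>R b"] eqa by simp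
      also have "\<dots> \<le> ereal (1/2 * (norm (r - t *\<^sub>R u))\<^sup>2) + ereal ((1 - t) * G0 + t * Gb)"
        using gt by (intro add_left_mono)
      finally have "1/2 * (norm r)\<^sup>2 + G0 \<le> 1/2 * (norm (r - t *\<^sub>R u))\<^sup>2 + ((1 - t) * G0 + t * Gb)"
        using G0 by simp
      then show "0 \<le> - t * (r \<bullet> u) + t^2/2 * (norm u)^2 + t * (Gb - G0)"
        unfolding nrm by (simp add: algebra_simps)
    qed simp
    then show ?thesis by (simp add: u_def matrix_vector_mult_diff_distrib inner_diff_right)
  qed
  have fc: "fenchel_conj g (transpose X *v r) \<le> ereal (r \<bullet> (X *v \<beta>0) - G0)"
    unfolding fenchel_conj_def
  proof (rule SUP_least)
    fix b
    show "ereal ((transpose X *v r) \<bullet> b) - g b \<le> ereal (r \<bullet> (X *v \<beta>0) - G0)"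
    proof (cases "g b")
      case (real Gb)
      then show ?thesis using subg[OF real] unfolding tr_inner[symmetric] by simp
    next
      case PInf then show ?thesis by simp
    next
      case MInf then show ?thesis using assms(1) unfolding proper_fun_def by blast
    qed
  qed
  have dr: "ereal (1/2 * (norm r)^2 + G0) \<le> dual_obj X y g lam0 r"
  proof -
    have "ereal ((- 1/2 * (norm r)\<^sup>2 + (1/lam0) * (y \<bullet> r)) - (r \<bullet> (X *v \<beta>0) - G0))
          \<le> dual_obj X y g lam0 r"
      unfolding dual_obj_def by (rule ereal_aux[OF fc])
    moreover have eqq: "(- 1/2 * (norm r)\<^sup>2 + (1/lam0) * (y \<bullet> r)) - (r \<bullet> (X *v \<beta>0) - G0)
        = 1/2 * (norm r)^2 + G0"
    proof -
      have e1: "r \<bullet> r = r \<bullet> a - r \<bullet> (X *v \<beta>0)" by (metis r_def inner_diff_right)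
      have e2: "r \<bullet> a = (1/lam0) * (y \<bullet> r)" by (simp add: a_def inner_commute)
      have "(1/lam0) * (y \<bullet> r) - r \<bullet> (X *v \<beta>0) = r \<bullet> r"
        using e1 e2 by simp
      then show ?thesis by (simp add: power2_norm_eq_inner algebra_simps)
    qed
    ultimately show ?thesis by (metis eqq)
  qed
  \<comment> \<open>dual optimum equals residual\<close>
  have fc0: "ereal (\<theta>0 \<bullet> (X *v \<beta>0)) - g \<beta>0 \<le> fenchel_conj g (transpose X *v \<theta>0)"
    unfolding fenchel_conj_def tr_inner by (rule SUP_upper) simp
  have d0: "ereal (1/2 * (norm r)^2 + G0) \<le> ereal (- 1/2 * (norm \<theta>0)\<^sup>2 + (1/lam0) * (y \<bullet> \<theta>0)) - fenchel_conj g (transpose X *v \<theta>0)"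
    using dr assms(8) unfolding dual_obj_def[of X y g lam0 \<theta>0] by (meson order_trans)
  have "ereal (1/2 * (norm r)^2 + G0) \<le> ereal (- 1/2 * (norm \<theta>0)\<^sup>2 + (1/lam0) * (y \<bullet> \<theta>0) - (\<theta>0 \<bullet> (X *v \<beta>0) - G0))"
  proof -
    note d0
    also have "ereal (- 1/2 * (norm \<theta>0)\<^sup>2 + (1/lam0) * (y \<bullet> \<theta>0)) - fenchel_conj g (transpose X *v \<theta>0)
       \<le> ereal (- 1/2 * (norm \<theta>0)\<^sup>2 + (1/lam0) * (y \<bullet> \<theta>0)) - (ereal (\<theta>0 \<bullet> (X *v \<beta>0)) - g \<beta>0)"
      by (rule ereal_minus_mono[OF order_refl fc0])
    also have "\<dots> = ereal (- 1/2 * (norm \<theta>0)\<^sup>2 + (1/lam0) * (y \<bullet> \<theta>0) - (\<theta>0 \<bullet> (X *v \<beta>0) - G0))"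
      unfolding G0 by simp
    finally show ?thesis .
  qed
  then have ineq: "1/2 * (norm r)^2 + G0 \<le> - 1/2 * (norm \<theta>0)\<^sup>2 + (1/lam0) * (y \<bullet> \<theta>0) - (\<theta>0 \<bullet> (X *v \<beta>0) - G0)"
    by simp
  have "(1/lam0) * (y \<bullet> \<theta>0) - \<theta>0 \<bullet> (X *v \<beta>0) = r \<bullet> \<theta>0"
    by (simp add: r_def a_def inner_diff_left inner_diff_right inner_commute)
  with ineq have "1/2 * (norm r)^2 + 1/2 * (norm \<theta>0)\<^sup>2 - r \<bullet> \<theta>0 \<le> 0" by linarith
  moreover have "1/2 * (norm r)^2 + 1/2 * (norm \<theta>0)\<^sup>2 - r \<bullet> \<theta>0 = 1/2 * (norm (r - \<theta>0))^2"
    unfolding power2_norm_eq_inner by (simp add: inner_diff_left inner_diff_right inner_commute algebra_simps)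
  ultimately have "(norm (r - \<theta>0))^2 \<le> 0" by linarith
  then have "norm (r - \<theta>0) = 0" by (smt (verit) zero_less_norm_iff zero_less_power2)
  then have th0: "\<theta>0 = r" by simp
  \<comment> \<open>homogeneity: G0 = r . X beta0\<close>
  have g00: "g 0 = 0" using assms(4)[rule_format, of 0 0] by (simp add: zero_ereal_def[symmetric])
  have "r \<bullet> (X *v 0) - r \<bullet> (X *v \<beta>0) \<le> 0 - G0" by (rule subg) (simp add: g00)
  then have le1: "G0 \<le> r \<bullet> (X *v \<beta>0)" by simp
  have "g (2 *\<^sub>R \<beta>0) = ereal (2 * G0)" using assms(4)[rule_format, of 2 \<beta>0] G0 by simp
  from subg[OF this] have "r \<bullet> (X *v \<beta>0) \<le> G0"
    by (simp add: matrix_vector_mult_scaleR)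
  with le1 have Geq: "G0 = r \<bullet> (X *v \<beta>0)" by simp
  have key: "(1/lam0) *\<^sub>R y - \<theta>0 = X *v \<beta>0" using th0 by (simp add: r_def a_def)
  show ?thesis
  proof (rule set_eqI)
    fix \<theta>
    have c1: "(0 \<ge> (y - \<theta>) \<bullet> (\<theta>0 - \<theta>)) \<longleftrightarrow>
       (norm (\<theta> - (1/2) *\<^sub>R (\<theta>0 + y)))\<^sup>2 \<le> 1/4 * (norm (\<theta>0 - y))\<^sup>2"
    proof -
      have "(norm (\<theta> - (1/2) *\<^sub>R (\<theta>0 + y)))\<^sup>2 - 1/4 * (norm (\<theta>0 - y))\<^sup>2 = (y - \<theta>) \<bullet> (\<theta>0 - \<theta>)"
        by (simp add: power2_norm_eq_inner inner_diff_left inner_diff_right inner_add_left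
            inner_add_right inner_commute algebra_simps)
      then show ?thesis by linarith
    qed
    have c2: "(0 \<ge> ((1/lam0) *\<^sub>R y - \<theta>0) \<bullet> (\<theta> - \<theta>0)) \<longleftrightarrow>
       0 \<le> g \<beta>0 - ereal (\<theta> \<bullet> (X *v \<beta>0))"
      unfolding key G0 Geq th0[symmetric]
      by (simp add: inner_diff_right inner_commute)
    show "\<theta> \<in> R_Sasvi y lam0 \<theta>0 \<longleftrightarrow> \<theta> \<in> R_DS X y g \<beta>0 \<theta>0"
      unfolding R_Sasvi_def R_DS_def using c1 c2 by simp
  qed
qed

end
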